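(* Let $R$ be a commutative unital ring and let $S \subseteq R$ be a proper unital subring such that the additive index $[R:S]$ is finite. Then there exists an ideal $I$ of $R$ with $I \subseteq S$ and $R/I$ finite (namely the conductor of $S$ in $R$, the largest ideal of $R$ contained in $S$); consequently $S/I$ is a subring of the finite ring $R/I$. Hence the proper finite-index subrings of $R$ correspond to the subrings of the finite quotient rings $R/I$, where $I$ ranges over the proper finite-index ideals of $R$. The analogous statement holds for a commutative algebra $R$ over a field $\mathbb{K}$ with "finite index" replaced by "finite $\mathbb{K}$-codimension" (for $\mathbb{K}$-subalgebras and ideals).
   Context: All rings are commutative and unital, subrings share the unit of the ambient ring. *)

theory Defs
  imports "HOL-Algebra.Algebra"
begin

text \<open>Finite codimension of a subset S (a K-subspace) of a K-module M:
  the quotient M/S is finite-dimensional over the field K, i.e. it is spanned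
  by the images of finitely many elements of M.\<close>

definition finite_codim :: "('k, 'c) ring_scheme \<Rightarrow> ('k, 'a, 'm) module_scheme \<Rightarrow> 'a set \<Rightarrow> bool" where
  "finite_codim K M S \<longleftrightarrow>
     (\<exists>B. finite B \<and> B \<subseteq> carrier M \<and>
        (\<forall>x \<in> carrier M. \<exists>s \<in> S. \<exists>c \<in> B \<rightarrow> carrier K.
            x = s \<oplus>\<^bsub>M\<^esub> (\<Oplus>\<^bsub>M\<^esub> b \<in> B. c b \<odot>\<^bsub>M\<^esub> b)))"

definition subalgebra :: "('k, 'c) ring_scheme \<Rightarrow> ('k, 'a, 'm) module_scheme \<Rightarrow> 'a set \<Rightarrow> bool" where
  "subalgebra K M S \<longleftrightarrow> subring S M \<and> (\<forall>k \<in> carrier K. \<forall>s \<in> S. k \<odot>\<^bsub>M\<^esub> s \<in> S)"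

end

theory Submission
  imports Defs
begin


definition subsp :: "('k,'c) ring_scheme \<Rightarrow> ('k,'a,'m) module_scheme \<Rightarrow> 'a set \<Rightarrow> bool" where
"subsp K M W \<longleftrightarrow> W \<subseteq> carrier M \<and> \<zero>\<^bsub>M\<^esub> \<in> W \<and> (\<forall>x\<in>W. \<forall>y\<in>W. x \<oplus>\<^bsub>M\<^esub> y \<in> W)
   \<and> (\<forall>a\<in>carrier K. \<forall>x\<in>W. a \<odot>\<^bsub>M\<^esub> x \<in> W)"

definition lin :: "('k,'c) ring_scheme \<Rightarrow> ('k,'a,'m) module_scheme \<Rightarrow> ('a \<Rightarrow> 'a) \<Rightarrow> bool" where
"lin K M f \<longleftrightarrow> (\<forall>x\<in>carrier M. f x \<in> carrier M) \<and>
   (\<forall>x\<in>carrier M. \<forall>y\<in>carrier M. f (x \<oplus>\<^bsub>M\<^esub> y) = f x \<oplus>\<^bsub>M\<^esub> f y) \<and>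
   (\<forall>a\<in>carrier K. \<forall>x\<in>carrier M. f (a \<odot>\<^bsub>M\<^esub> x) = a \<odot>\<^bsub>M\<^esub> f x)"

fun ext :: "('k,'c) ring_scheme \<Rightarrow> ('k,'a,'m) module_scheme \<Rightarrow> 'a set \<Rightarrow> 'a list \<Rightarrow> 'a set" where
  "ext K M A [] = A"
| "ext K M A (b#bs) = {y \<oplus>\<^bsub>M\<^esub> k \<odot>\<^bsub>M\<^esub> b | y k. y \<in> ext K M A bs \<and> k \<in> carrier K}"

lemma ext_mono: "A \<subseteq> A' \<Longrightarrow> ext K M A cs \<subseteq> ext K M A' cs"
  by (induction cs) auto

lemma ext_append: "ext K M (ext K M A ds) cs = ext K M A (cs @ ds)"
  by (induction cs) auto

context module
begin

lemma ext_subsp: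
  assumes "subsp R M A" "set bs \<subseteq> carrier M"
  shows "subsp R M (ext R M A bs)"
  using assms(2)
proof (induction bs)
  case Nil then show ?case using assms(1) by simp
next
  case (Cons b bs)
  then have IH: "subsp R M (ext R M A bs)" and b: "b \<in> carrier M" by auto
  let ?E = "ext R M A bs"
  have Ec: "?E \<subseteq> carrier M" using IH unfolding subsp_def by blast
  have E0: "\<zero>\<^bsub>M\<^esub> \<in> ?E" using IH unfolding subsp_def by blast
  have Eadd: "x \<oplus>\<^bsub>M\<^esub> y \<in> ?E" if "x \<in> ?E" "y \<in> ?E" for x y using IH that unfolding subsp_def by blast
  have Esm: "a \<odot>\<^bsub>M\<^esub> x \<in> ?E" if "a \<in> carrier R" "x \<in> ?E" for a x using IH that unfolding subsp_def by blast
  show ?case unfolding subsp_def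
  proof (intro conjI ballI subsetI)
    fix z assume "z \<in> ext R M A (b # bs)"
    then obtain y k where "z = y \<oplus>\<^bsub>M\<^esub> k \<odot>\<^bsub>M\<^esub> b" "y \<in> ?E" "k \<in> carrier R"
      by (auto simp only: ext.simps)
    then show "z \<in> carrier M" using Ec b by auto
  next
    have "\<zero>\<^bsub>M\<^esub> = \<zero>\<^bsub>M\<^esub> \<oplus>\<^bsub>M\<^esub> \<zero> \<odot>\<^bsub>M\<^esub> b" using b by simp
    moreover have "\<zero> \<in> carrier R" by simp
    ultimately show "\<zero>\<^bsub>M\<^esub> \<in> ext R M A (b # bs)" using E0 by (simp only: ext.simps) blast
  next
    fix x y assume "x \<in> ext R M A (b # bs)" "y \<in> ext R M A (b # bs)"
    then obtain x0 k y0 l where xy: "x = x0 \<oplus>\<^bsub>M\<^esub> k \<odot>\<^bsub>M\<^esub> b" "x0 \<in> ?E" "k \<in> carrier R"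
        "y = y0 \<oplus>\<^bsub>M\<^esub> l \<odot>\<^bsub>M\<^esub> b" "y0 \<in> ?E" "l \<in> carrier R" by (auto simp only: ext.simps)
    have c: "x0 \<in> carrier M" "y0 \<in> carrier M" using xy Ec by auto
    have "x \<oplus>\<^bsub>M\<^esub> y = (x0 \<oplus>\<^bsub>M\<^esub> y0) \<oplus>\<^bsub>M\<^esub> (k \<oplus> l) \<odot>\<^bsub>M\<^esub> b"
    proof -
      have e: "(k \<oplus> l) \<odot>\<^bsub>M\<^esub> b = k \<odot>\<^bsub>M\<^esub> b \<oplus>\<^bsub>M\<^esub> l \<odot>\<^bsub>M\<^esub> b" using xy b by (simp add: smult_l_distr)
      have ac: "\<And>A B C D. \<lbrakk>A \<in> carrier M; B \<in> carrier M; C \<in> carrier M; D \<in> carrier M\<rbrakk> \<Longrightarrow>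
           A \<oplus>\<^bsub>M\<^esub> B \<oplus>\<^bsub>M\<^esub> (C \<oplus>\<^bsub>M\<^esub> D) = A \<oplus>\<^bsub>M\<^esub> C \<oplus>\<^bsub>M\<^esub> (B \<oplus>\<^bsub>M\<^esub> D)"
        by (simp add: M.a_assoc M.a_lcomm)
      have "k \<odot>\<^bsub>M\<^esub> b \<in> carrier M" "l \<odot>\<^bsub>M\<^esub> b \<in> carrier M" using xy b by auto
      then show ?thesis unfolding e xy(1,4) using ac c by blast
    qed
    moreover have "x0 \<oplus>\<^bsub>M\<^esub> y0 \<in> ?E" using Eadd xy by blast
    moreover have "k \<oplus> l \<in> carrier R" using xy by simp
    ultimately show "x \<oplus>\<^bsub>M\<^esub> y \<in> ext R M A (b # bs)" by (simp only: ext.simps) blast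
  next
    fix a x assume a: "a \<in> carrier R" and "x \<in> ext R M A (b # bs)"
    then obtain x0 k where xy: "x = x0 \<oplus>\<^bsub>M\<^esub> k \<odot>\<^bsub>M\<^esub> b" "x0 \<in> ?E" "k \<in> carrier R"
      by (auto simp only: ext.simps)
    have c: "x0 \<in> carrier M" using xy Ec by auto
    have "a \<odot>\<^bsub>M\<^esub> x = (a \<odot>\<^bsub>M\<^esub> x0) \<oplus>\<^bsub>M\<^esub> (a \<otimes> k) \<odot>\<^bsub>M\<^esub> b"
      using xy c b a by (simp add: smult_r_distr smult_assoc1)
    moreover have "a \<odot>\<^bsub>M\<^esub> x0 \<in> ?E" using Esm xy a by blast
    moreover have "a \<otimes> k \<in> carrier R" using xy a by simp
    ultimately show "a \<odot>\<^bsub>M\<^esub> x \<in> ext R M A (b # bs)" by (simp only: ext.simps) blast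
  qed
qed

lemma ext_carrier: "subsp R M A \<Longrightarrow> set bs \<subseteq> carrier M \<Longrightarrow> ext R M A bs \<subseteq> carrier M"
proof -
  assume "subsp R M A" "set bs \<subseteq> carrier M"
  then have "subsp R M (ext R M A bs)" by (rule ext_subsp)
  then show ?thesis unfolding subsp_def by blast
qed

lemma main_P:
  assumes fld: "field R" and U: "subsp R M U" and W: "subsp R M W" and phi: "lin R M \<phi>"
    and bs: "set bs \<subseteq> carrier M" and hyp: "\<forall>u\<in>U. \<phi> u \<in> ext R M W bs"
  shows "\<exists>cs. set cs \<subseteq> U \<and> U \<subseteq> ext R M {u\<in>U. \<phi> u \<in> W} cs"
  using bs W hyp
proof (induction bs arbitrary: W rule: rev_induct)
  case Nil
  then show ?case by (intro exI[of _ "[]"]) auto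
next
  case (snoc b bs)
  have b: "b \<in> carrier M" and bsc: "set bs \<subseteq> carrier M" using snoc.prems by auto
  define W' where "W' = ext R M W [b]"
  have W': "subsp R M W'" unfolding W'_def by (rule ext_subsp[OF snoc.prems(2)]) (use b in simp)
  have "\<forall>u\<in>U. \<phi> u \<in> ext R M W' bs" using snoc.prems(3) unfolding W'_def ext_append by simp
  from snoc.IH[OF bsc W' this] obtain cs' where cs': "set cs' \<subseteq> U" "U \<subseteq> ext R M {u\<in>U. \<phi> u \<in> W'} cs'"
    by blast
  define U0 where "U0 = {u\<in>U. \<phi> u \<in> W}"
  have Uc: "U \<subseteq> carrier M" using U unfolding subsp_def by auto
  have Wc: "W \<subseteq> carrier M" using snoc.prems(2) unfolding subsp_def by auto
  show ?case
  proof (cases "{u\<in>U. \<phi> u \<in> W'} \<subseteq> U0")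
    case True
    then show ?thesis using cs' ext_mono[OF True, of R M cs'] unfolding U0_def by blast
  next
    case False
    then obtain u0 where u0: "u0 \<in> U" "\<phi> u0 \<in> W'" "\<phi> u0 \<notin> W" unfolding U0_def by auto
    then obtain w0 k0 where w0: "\<phi> u0 = w0 \<oplus>\<^bsub>M\<^esub> k0 \<odot>\<^bsub>M\<^esub> b" "w0 \<in> W" "k0 \<in> carrier R"
      unfolding W'_def by auto
    have u0c: "u0 \<in> carrier M" using u0 Uc by auto
    have w0c: "w0 \<in> carrier M" using w0 Wc by auto
    have k0: "k0 \<noteq> \<zero>" using w0 u0(3) w0c b by auto
    have k0U: "k0 \<in> Units R" using fld k0 w0(3) by (simp add: field.field_Units)
    have sub: "{u\<in>U. \<phi> u \<in> W'} \<subseteq> ext R M U0 [u0]"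
    proof
      fix u assume "u \<in> {u\<in>U. \<phi> u \<in> W'}"
      then obtain w k where u: "u \<in> U" "\<phi> u = w \<oplus>\<^bsub>M\<^esub> k \<odot>\<^bsub>M\<^esub> b" "w \<in> W" "k \<in> carrier R"
        unfolding W'_def by auto
      have uc: "u \<in> carrier M" using u Uc by auto
      have wc: "w \<in> carrier M" using u Wc by auto
      define t where "t = k \<otimes> inv k0"
      have tc: "t \<in> carrier R" unfolding t_def using k0U u(4) by simp
      have tk0: "\<ominus> t \<otimes> k0 = \<ominus> k"
      proof -
        have i: "inv k0 \<in> carrier R" "inv k0 \<otimes> k0 = \<one>" using k0U by auto
        have "\<ominus> (k \<otimes> inv k0) \<otimes> k0 = \<ominus> (k \<otimes> (inv k0 \<otimes> k0))" using i(1) u(4) w0(3) by algebra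
        then show ?thesis using i u(4) by (simp add: t_def)
      qed
      define u' where "u' = u \<oplus>\<^bsub>M\<^esub> (\<ominus> t) \<odot>\<^bsub>M\<^esub> u0"
      have u'U: "u' \<in> U" unfolding u'_def using U u u0 tc unfolding subsp_def by auto
      have u'c: "u' \<in> carrier M" using u'U Uc by auto
      have "\<phi> u' = \<phi> u \<oplus>\<^bsub>M\<^esub> (\<ominus> t) \<odot>\<^bsub>M\<^esub> \<phi> u0"
        unfolding u'_def using phi uc u0c tc unfolding lin_def by simp
      also have "\<dots> = (w \<oplus>\<^bsub>M\<^esub> (\<ominus> t) \<odot>\<^bsub>M\<^esub> w0) \<oplus>\<^bsub>M\<^esub> (k \<oplus> (\<ominus> t \<otimes> k0)) \<odot>\<^bsub>M\<^esub> b"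
      proof -
        have mt: "\<ominus> t \<in> carrier R" using tc by simp
        have e1: "(\<ominus> t) \<odot>\<^bsub>M\<^esub> \<phi> u0 = (\<ominus> t) \<odot>\<^bsub>M\<^esub> w0 \<oplus>\<^bsub>M\<^esub> (\<ominus> t \<otimes> k0) \<odot>\<^bsub>M\<^esub> b"
          unfolding w0(1) using mt w0c b w0(3) by (simp add: smult_r_distr smult_assoc1)
        have e2: "(k \<oplus> (\<ominus> t \<otimes> k0)) \<odot>\<^bsub>M\<^esub> b = k \<odot>\<^bsub>M\<^esub> b \<oplus>\<^bsub>M\<^esub> (\<ominus> t \<otimes> k0) \<odot>\<^bsub>M\<^esub> b"
          using mt u(4) w0(3) b by (simp add: smult_l_distr)
        have c: "(\<ominus> t) \<odot>\<^bsub>M\<^esub> w0 \<in> carrier M" "(\<ominus> t \<otimes> k0) \<odot>\<^bsub>M\<^esub> b \<in> carrier M" "k \<odot>\<^bsub>M\<^esub> b \<in> carrier M"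
          using mt w0c b w0(3) u(4) by auto
        have ac: "\<And>A B C D. \<lbrakk>A \<in> carrier M; B \<in> carrier M; C \<in> carrier M; D \<in> carrier M\<rbrakk> \<Longrightarrow>
           A \<oplus>\<^bsub>M\<^esub> B \<oplus>\<^bsub>M\<^esub> (C \<oplus>\<^bsub>M\<^esub> D) = A \<oplus>\<^bsub>M\<^esub> C \<oplus>\<^bsub>M\<^esub> (B \<oplus>\<^bsub>M\<^esub> D)"
          by (simp add: M.a_assoc M.a_lcomm)
        show ?thesis unfolding e1 e2 u(2) using ac c wc by blast
      qed
      also have "\<dots> = w \<oplus>\<^bsub>M\<^esub> (\<ominus> t) \<odot>\<^bsub>M\<^esub> w0"
      proof -
        have "k \<oplus> (\<ominus> t \<otimes> k0) = \<zero>" unfolding tk0 using u(4) by (rule R.r_neg)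
        then show ?thesis using wc w0c tc b by simp
      qed
      finally have "\<phi> u' \<in> W" using snoc.prems(2) u(3) w0(2) tc unfolding subsp_def by auto
      then have "u' \<in> U0" using u'U unfolding U0_def by auto
      moreover have "u = u' \<oplus>\<^bsub>M\<^esub> t \<odot>\<^bsub>M\<^esub> u0"
      proof -
        have "u' \<oplus>\<^bsub>M\<^esub> t \<odot>\<^bsub>M\<^esub> u0 = u \<oplus>\<^bsub>M\<^esub> (\<ominus> t \<oplus> t) \<odot>\<^bsub>M\<^esub> u0"
        proof -
          have mt: "\<ominus> t \<in> carrier R" using tc by simp
          have c: "(\<ominus> t) \<odot>\<^bsub>M\<^esub> u0 \<in> carrier M" "t \<odot>\<^bsub>M\<^esub> u0 \<in> carrier M" using mt tc u0c by auto
          have "(\<ominus> t \<oplus> t) \<odot>\<^bsub>M\<^esub> u0 = (\<ominus> t) \<odot>\<^bsub>M\<^esub> u0 \<oplus>\<^bsub>M\<^esub> t \<odot>\<^bsub>M\<^esub> u0"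
            using mt tc u0c by (simp add: smult_l_distr)
          then show ?thesis unfolding u'_def using c uc by (simp only: M.a_assoc)
        qed
        also have "\<dots> = u"
        proof -
          have "\<ominus> t \<oplus> t = \<zero>" using tc by (rule R.l_neg)
          then show ?thesis using uc u0c by simp
        qed
        finally show ?thesis by simp
      qed
      ultimately show "u \<in> ext R M U0 [u0]" using tc by auto
    qed
    have "U \<subseteq> ext R M (ext R M U0 [u0]) cs'" using cs'(2) ext_mono[OF sub, of R M cs'] by blast
    then have "U \<subseteq> ext R M U0 (cs' @ [u0])" unfolding ext_append .
    then show ?thesis using cs'(1) u0(1) unfolding U0_def by (intro exI[of _ "cs' @ [u0]"]) auto
  qed
qed

end


context module
begin

lemma finsum_to_ext:
  assumes Sc: "S \<subseteq> carrier M"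
  shows "distinct xs \<Longrightarrow> set xs \<subseteq> carrier M \<Longrightarrow> c \<in> set xs \<rightarrow> carrier R \<Longrightarrow> s \<in> S \<Longrightarrow>
     s \<oplus>\<^bsub>M\<^esub> (\<Oplus>\<^bsub>M\<^esub> b \<in> set xs. c b \<odot>\<^bsub>M\<^esub> b) \<in> ext R M S xs"
proof (induction xs)
  case Nil
  then show ?case using Sc by auto
next
  case (Cons b xs)
  have b: "b \<in> carrier M" "b \<notin> set xs" "c b \<in> carrier R" using Cons.prems by auto
  have f: "(\<lambda>b. c b \<odot>\<^bsub>M\<^esub> b) \<in> set xs \<rightarrow> carrier M" using Cons.prems by auto
  have sc: "s \<in> carrier M" using Cons.prems Sc by auto
  have "(\<Oplus>\<^bsub>M\<^esub> b \<in> set (b#xs). c b \<odot>\<^bsub>M\<^esub> b) = c b \<odot>\<^bsub>M\<^esub> b \<oplus>\<^bsub>M\<^esub> (\<Oplus>\<^bsub>M\<^esub> b \<in> set xs. c b \<odot>\<^bsub>M\<^esub> b)"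
    using M.finsum_insert[OF finite_set b(2) f] b by simp
  then have "s \<oplus>\<^bsub>M\<^esub> (\<Oplus>\<^bsub>M\<^esub> b \<in> set (b#xs). c b \<odot>\<^bsub>M\<^esub> b) =
      (s \<oplus>\<^bsub>M\<^esub> (\<Oplus>\<^bsub>M\<^esub> b \<in> set xs. c b \<odot>\<^bsub>M\<^esub> b)) \<oplus>\<^bsub>M\<^esub> c b \<odot>\<^bsub>M\<^esub> b"
    using sc b f M.finsum_closed[OF f] by (simp add: M.a_ac)
  moreover have "s \<oplus>\<^bsub>M\<^esub> (\<Oplus>\<^bsub>M\<^esub> b \<in> set xs. c b \<odot>\<^bsub>M\<^esub> b) \<in> ext R M S xs"
    using Cons by auto
  ultimately show ?case using b(3) by (simp only: ext.simps) blast
qed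

lemma codim_to_ext:
  assumes "finite_codim R M S" "S \<subseteq> carrier M"
  shows "\<exists>bs. set bs \<subseteq> carrier M \<and> carrier M \<subseteq> ext R M S bs"
proof -
  obtain B where B: "finite B" "B \<subseteq> carrier M" and
    rep: "\<forall>x \<in> carrier M. \<exists>s \<in> S. \<exists>c \<in> B \<rightarrow> carrier R. x = s \<oplus>\<^bsub>M\<^esub> (\<Oplus>\<^bsub>M\<^esub> b \<in> B. c b \<odot>\<^bsub>M\<^esub> b)"
    using assms(1) unfolding finite_codim_def by blast
  obtain xs where xs: "set xs = B" "distinct xs" using finite_distinct_list[OF B(1)] by blast
  have "carrier M \<subseteq> ext R M S xs"
  proof
    fix x assume "x \<in> carrier M"
    then obtain s c where "s \<in> S" "c \<in> B \<rightarrow> carrier R" "x = s \<oplus>\<^bsub>M\<^esub> (\<Oplus>\<^bsub>M\<^esub> b \<in> B. c b \<odot>\<^bsub>M\<^esub> b)"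
      using rep by blast
    then show "x \<in> ext R M S xs" using finsum_to_ext[OF assms(2) xs(2)] xs(1) B(2) by simp
  qed
  then show ?thesis using xs B by blast
qed

lemma ext_to_finsum:
  assumes Ac: "A \<subseteq> carrier M"
  shows "set cs \<subseteq> carrier M \<Longrightarrow> x \<in> ext R M A cs \<Longrightarrow>
     \<exists>s\<in>A. \<exists>c\<in>set cs \<rightarrow> carrier R. x = s \<oplus>\<^bsub>M\<^esub> (\<Oplus>\<^bsub>M\<^esub> b \<in> set cs. c b \<odot>\<^bsub>M\<^esub> b)"
proof (induction cs arbitrary: x)
  case Nil
  then have "x \<in> carrier M" using Ac by auto
  then show ?case using Nil by (intro bexI[of _ x] bexI[of _ "\<lambda>_. \<zero>"]) auto
next
  case (Cons b cs)
  from Cons.prems obtain y k where yk: "x = y \<oplus>\<^bsub>M\<^esub> k \<odot>\<^bsub>M\<^esub> b" "y \<in> ext R M A cs" "k \<in> carrier R"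
    by (auto simp only: ext.simps)
  have b: "b \<in> carrier M" and csc: "set cs \<subseteq> carrier M" using Cons.prems by auto
  obtain s c where s: "s \<in> A" "c \<in> set cs \<rightarrow> carrier R"
    "y = s \<oplus>\<^bsub>M\<^esub> (\<Oplus>\<^bsub>M\<^esub> b \<in> set cs. c b \<odot>\<^bsub>M\<^esub> b)"
    using Cons.IH[OF csc yk(2)] by blast
  have sc: "s \<in> carrier M" using s Ac by auto
  define F where "F = set cs - {b}"
  have finF: "finite F" "b \<notin> F" unfolding F_def by auto
  have Fc: "F \<subseteq> set cs" unfolding F_def by auto
  define c0 where "c0 = (if b \<in> set cs then c b else \<zero>)"
  have c0c: "c0 \<in> carrier R" unfolding c0_def using s(2) by auto
  define c' where "c' = c(b := c0 \<oplus> k)"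
  have c'c: "c' \<in> set (b#cs) \<rightarrow> carrier R" unfolding c'_def using s(2) c0c yk(3) by auto
  have fF: "(\<lambda>b. c b \<odot>\<^bsub>M\<^esub> b) \<in> F \<rightarrow> carrier M" using s(2) csc Fc by auto
  have eqF: "(\<Oplus>\<^bsub>M\<^esub> a \<in> F. c' a \<odot>\<^bsub>M\<^esub> a) = (\<Oplus>\<^bsub>M\<^esub> a \<in> F. c a \<odot>\<^bsub>M\<^esub> a)"
    by (rule M.finsum_cong') (use fF in \<open>auto simp: c'_def F_def\<close>)
  have fF': "(\<lambda>b. c' b \<odot>\<^bsub>M\<^esub> b) \<in> F \<rightarrow> carrier M"
  proof
    fix a assume a: "a \<in> F"
    then have "c' a = c a" unfolding c'_def F_def by auto
    then show "c' a \<odot>\<^bsub>M\<^esub> a \<in> carrier M" using fF a by auto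
  qed
  define \<Sigma> where "\<Sigma> = (\<Oplus>\<^bsub>M\<^esub> a \<in> F. c a \<odot>\<^bsub>M\<^esub> a)"
  have \<Sigma>c: "\<Sigma> \<in> carrier M" unfolding \<Sigma>_def using M.finsum_closed[OF fF] .
  have set1: "set (b#cs) = insert b F" unfolding F_def by auto
  have e1: "(\<Oplus>\<^bsub>M\<^esub> a \<in> set (b#cs). c' a \<odot>\<^bsub>M\<^esub> a) = (c0 \<oplus> k) \<odot>\<^bsub>M\<^esub> b \<oplus>\<^bsub>M\<^esub> \<Sigma>"
    unfolding set1 using M.finsum_insert[OF finF fF'] c0c yk(3) b eqF unfolding \<Sigma>_def
    by (simp add: c'_def)
  have e2: "(\<Oplus>\<^bsub>M\<^esub> a \<in> set cs. c a \<odot>\<^bsub>M\<^esub> a) = c0 \<odot>\<^bsub>M\<^esub> b \<oplus>\<^bsub>M\<^esub> \<Sigma>"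
  proof (cases "b \<in> set cs")
    case True
    then have "set cs = insert b F" unfolding F_def by auto
    then show ?thesis using M.finsum_insert[OF finF fF] s(2) True b unfolding \<Sigma>_def c0_def by auto
  next
    case False
    then have "set cs = F" unfolding F_def by auto
    then show ?thesis using False b \<Sigma>c unfolding \<Sigma>_def c0_def by simp
  qed
  have "x = s \<oplus>\<^bsub>M\<^esub> (\<Oplus>\<^bsub>M\<^esub> a \<in> set (b#cs). c' a \<odot>\<^bsub>M\<^esub> a)"
  proof -
    have d: "(c0 \<oplus> k) \<odot>\<^bsub>M\<^esub> b = c0 \<odot>\<^bsub>M\<^esub> b \<oplus>\<^bsub>M\<^esub> k \<odot>\<^bsub>M\<^esub> b"
      using c0c yk(3) b by (simp add: smult_l_distr)
    have cc: "c0 \<odot>\<^bsub>M\<^esub> b \<in> carrier M" "k \<odot>\<^bsub>M\<^esub> b \<in> carrier M" using c0c yk(3) b by auto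
    show ?thesis unfolding e1 yk(1) s(3) e2 d using cc sc \<Sigma>c by (simp add: M.a_ac)
  qed
  then show ?case using s(1) c'c by blast
qed

lemma ext_to_codim:
  assumes "A \<subseteq> carrier M" "set cs \<subseteq> carrier M" "carrier M \<subseteq> ext R M A cs"
  shows "finite_codim R M A"
  unfolding finite_codim_def
  using ext_to_finsum[OF assms(1) assms(2)] assms(2,3) by (intro exI[of _ "set cs"]) blast

end


lemma conductor_props:
  fixes R (structure)
  assumes cr: "cring R" and sr: "subring S R" and ne: "S \<noteq> carrier R"
  defines "I \<equiv> {x\<in>carrier R. \<forall>y\<in>carrier R. x \<otimes> y \<in> S}"
  shows "ideal I R" "I \<subseteq> S" "I \<noteq> carrier R" "\<forall>J. ideal J R \<and> J \<subseteq> S \<longrightarrow> J \<subseteq> I"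
    "subring ((\<lambda>s. I +> s) ` S) (R Quot I)"
proof -
  interpret cring R by fact
  have Sc: "S \<subseteq> carrier R" using subringE(1)[OF sr] .
  show IS: "I \<subseteq> S" unfolding I_def using one_closed by fastforce
  show id: "ideal I R"
  proof (rule idealI)
    show "ring R" by (rule ring_axioms)
    show "subgroup I (add_monoid R)"
    proof (rule add.subgroupI)
      show "I \<subseteq> carrier R" unfolding I_def by auto
      show "I \<noteq> {}" unfolding I_def using subringE(2)[OF sr] by auto
      show "\<ominus> a \<in> I" if "a \<in> I" for a
        using that subringE(5)[OF sr] unfolding I_def by (auto simp: l_minus)
      show "a \<oplus> b \<in> I" if "a \<in> I" "b \<in> I" for a b
        using that subringE(7)[OF sr] unfolding I_def by (auto simp: l_distr)
    qed
    show "x \<otimes> a \<in> I" if "a \<in> I" "x \<in> carrier R" for a x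
    proof -
      have "x \<otimes> a \<otimes> y = a \<otimes> (x \<otimes> y)" if "y \<in> carrier R" for y
        using that \<open>a \<in> I\<close> \<open>x \<in> carrier R\<close> unfolding I_def by (auto simp: m_lcomm m_assoc m_comm)
      then show ?thesis using that unfolding I_def by auto
    qed
    show "a \<otimes> x \<in> I" if "a \<in> I" "x \<in> carrier R" for a x
      using that unfolding I_def by (auto simp: m_assoc)
  qed
  show "I \<noteq> carrier R"
  proof
    assume "I = carrier R"
    then have "carrier R \<subseteq> S" using IS by auto
    then show False using ne Sc by auto
  qed
  show "\<forall>J. ideal J R \<and> J \<subseteq> S \<longrightarrow> J \<subseteq> I"
    unfolding I_def using ideal.I_r_closed ideal.Icarr by fastforce
  interpret ideal I R by fact
  show "subring ((\<lambda>s. I +> s) ` S) (R Quot I)"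
    using ring_hom_ring.img_is_subring[OF rcos_ring_hom_ring sr] by simp
qed


lemma finite_quot:
  fixes R (structure)
  assumes cr: "cring R" and sr: "subring S R" and fin: "finite (a_rcosets S)"
    and id: "ideal I R"
    and Idef: "I = {x\<in>carrier R. \<forall>y\<in>carrier R. x \<otimes> y \<in> S}"
  shows "finite (carrier (R Quot I))"
proof -
  interpret cring R by fact
  interpret S: abelian_subgroup S R
    by (rule abelian_subgroupI3[OF additive_subgroup.intro[OF subring.axioms(1)[OF sr]] is_abelian_group])
  interpret I: abelian_subgroup I R
    by (rule abelian_subgroupI3[OF ideal.axioms(1)[OF id] is_abelian_group])
  have Sc: "S \<subseteq> carrier R" using subringE(1)[OF sr] .
  define rep where "rep C = (SOME x. x \<in> C)" for C :: "'a set"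
  define T where "T = insert \<one> (rep ` (a_rcosets S))"
  define f where "f x = (\<lambda>t\<in>T. S +> (x \<otimes> t))" for x
  have repS: "rep (S +> z) \<in> S +> z" if "z \<in> carrier R" for z
  proof -
    have "z \<in> S +> z" using S.a_rcos_self that by blast
    then show ?thesis unfolding rep_def by (rule someI)
  qed
  have rcc: "S +> z \<in> a_rcosets S" if "z \<in> carrier R" for z
    using a_rcosetsI[OF Sc that] .
  have Tc: "T \<subseteq> carrier R"
  proof
    fix t assume "t \<in> T"
    then consider "t = \<one>" | C where "C \<in> a_rcosets S" "t = rep C" unfolding T_def by auto
    then show "t \<in> carrier R"
    proof cases
      case 2
      then obtain z where z: "z \<in> carrier R" "C = S +> z" unfolding A_RCOSETS_def' by auto
      then show ?thesis using repS[OF z(1)] 2 S.a_elemrcos_carrier by auto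
    qed simp
  qed
  have finT: "finite T" unfolding T_def using fin by simp
  have "f ` carrier R \<subseteq> PiE T (\<lambda>_. a_rcosets S)"
    unfolding f_def using Tc rcc by auto
  then have finf: "finite (f ` carrier R)"
    using finite_subset finite_PiE[OF finT, of "\<lambda>_. a_rcosets S"] fin by blast
  have key: "I +> x = I +> x'" if x: "x \<in> carrier R" "x' \<in> carrier R" "f x = f x'" for x x'
  proof -
    define d where "d = x \<ominus> x'"
    have dc: "d \<in> carrier R" unfolding d_def using x by simp
    have dT: "d \<otimes> t \<in> S" if t: "t \<in> T" for t
    proof -
      have tc: "t \<in> carrier R" using Tc t by auto
      have "S +> (x \<otimes> t) = S +> (x' \<otimes> t)" using x(3) t unfolding f_def by (metis restrict_apply')
      moreover have "x \<otimes> t \<in> S +> (x \<otimes> t)" using S.a_rcos_self[of "x \<otimes> t"] tc x by simp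
      ultimately have "x \<otimes> t \<in> S +> (x' \<otimes> t)" by simp
      then have "x \<otimes> t \<ominus> x' \<otimes> t \<in> S" using S.a_rcos_module_minus[OF ring_axioms] tc x by simp
      moreover have "x \<otimes> t \<ominus> x' \<otimes> t = d \<otimes> t" unfolding d_def using tc x by algebra
      ultimately show ?thesis by simp
    qed
    have dS: "d \<in> S" using dT[of \<one>] dc unfolding T_def by simp
    have "d \<in> I"
      unfolding Idef
    proof (intro CollectI conjI ballI dc)
      fix z assume z: "z \<in> carrier R"
      define r where "r = rep (S +> z)"
      have rT: "r \<in> T" unfolding T_def r_def using rcc[OF z] by auto
      have rc: "r \<in> carrier R" using rT Tc by auto
      have "r \<ominus> z \<in> S" using repS[OF z] S.a_rcos_module_minus[OF ring_axioms z rc] unfolding r_def by simp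
      then have "d \<otimes> (r \<ominus> z) \<in> S" using dS subringE(6)[OF sr] by simp
      then have "d \<otimes> r \<ominus> d \<otimes> (r \<ominus> z) \<in> S" using dT[OF rT] subringE(7,5)[OF sr] by (simp add: minus_eq)
      moreover have "d \<otimes> r \<ominus> d \<otimes> (r \<ominus> z) = d \<otimes> z" using dc rc z by algebra
      ultimately show "d \<otimes> z \<in> S" by simp
    qed
    then have "x \<in> I +> x'" using I.a_rcos_module_minus[OF ring_axioms x(2,1)] unfolding d_def by simp
    then show ?thesis using I.a_repr_independence' x by simp
  qed
  have "carrier (R Quot I) = (\<lambda>x. I +> x) ` carrier R"
    unfolding FactRing_def A_RCOSETS_def' by auto
  also have "\<dots> = (\<lambda>v. I +> inv_into (carrier R) f v) ` (f ` carrier R)"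
  proof -
    have "I +> x = I +> inv_into (carrier R) f (f x)" if "x \<in> carrier R" for x
      using key[OF that inv_into_into[of "f x" f "carrier R"]] that f_inv_into_f[of "f x" f "carrier R"]
      by auto
    then show ?thesis by (auto simp: image_image)
  qed
  finally show ?thesis using finf by simp
qed


context algebra
begin

lemma M_ring: "ring M" using M_cring by (rule cring.axioms(1))
lemma Ml_distr: "\<lbrakk>x \<in> carrier M; y \<in> carrier M; z \<in> carrier M\<rbrakk> \<Longrightarrow>
   (x \<oplus>\<^bsub>M\<^esub> y) \<otimes>\<^bsub>M\<^esub> z = x \<otimes>\<^bsub>M\<^esub> z \<oplus>\<^bsub>M\<^esub> y \<otimes>\<^bsub>M\<^esub> z"
  using M_ring by (simp add: ring.ring_simprules)
lemma Mr_distr: "\<lbrakk>x \<in> carrier M; y \<in> carrier M; z \<in> carrier M\<rbrakk> \<Longrightarrow>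
   z \<otimes>\<^bsub>M\<^esub> (x \<oplus>\<^bsub>M\<^esub> y) = z \<otimes>\<^bsub>M\<^esub> x \<oplus>\<^bsub>M\<^esub> z \<otimes>\<^bsub>M\<^esub> y"
  using M_ring by (simp add: ring.ring_simprules)
lemma Mm_comm: "\<lbrakk>x \<in> carrier M; y \<in> carrier M\<rbrakk> \<Longrightarrow> x \<otimes>\<^bsub>M\<^esub> y = y \<otimes>\<^bsub>M\<^esub> x"
  using M_cring by (rule cring.cring_simprules)

definition J where "J S ts = {x\<in>carrier M. \<forall>t\<in>set ts. x \<otimes>\<^bsub>M\<^esub> t \<in> S}"

lemma J_subsp:
  assumes S: "subsp R M S" and ts: "set ts \<subseteq> carrier M"
  shows "subsp R M (J S ts)"
  unfolding subsp_def
proof (intro conjI ballI)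
  show "J S ts \<subseteq> carrier M" unfolding J_def by auto
  show "\<zero>\<^bsub>M\<^esub> \<in> J S ts" unfolding J_def using S ts unfolding subsp_def by auto
  fix x y assume "x \<in> J S ts" "y \<in> J S ts"
  then show "x \<oplus>\<^bsub>M\<^esub> y \<in> J S ts" unfolding J_def using S ts unfolding subsp_def
    by (auto simp: Ml_distr)
next
  fix a x assume "a \<in> carrier R" "x \<in> J S ts"
  then show "a \<odot>\<^bsub>M\<^esub> x \<in> J S ts" unfolding J_def using S ts unfolding subsp_def
    by (auto simp: smult_assoc2)
qed

lemma J_ext:
  assumes fld: "field R" and S: "subsp R M S" and bs: "set bs \<subseteq> carrier M"
    and cov: "carrier M \<subseteq> ext R M S bs"
  shows "set ts \<subseteq> carrier M \<Longrightarrow> \<exists>cs. set cs \<subseteq> carrier M \<and> carrier M \<subseteq> ext R M (J S ts) cs"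
proof (induction ts)
  case Nil
  have "J S [] = carrier M" unfolding J_def by auto
  then show ?case by (intro exI[of _ "[]"]) auto
next
  case (Cons t ts)
  then have t: "t \<in> carrier M" and tsc: "set ts \<subseteq> carrier M" by auto
  from Cons.IH[OF tsc] obtain ds where ds: "set ds \<subseteq> carrier M" "carrier M \<subseteq> ext R M (J S ts) ds"
    by blast
  have U: "subsp R M (J S ts)" by (rule J_subsp[OF S tsc])
  have phi: "lin R M (\<lambda>x. x \<otimes>\<^bsub>M\<^esub> t)" unfolding lin_def using t
    by (auto simp: Ml_distr smult_assoc2)
  have hyp: "\<forall>u\<in>J S ts. u \<otimes>\<^bsub>M\<^esub> t \<in> ext R M S bs" using cov t unfolding J_def by auto
  obtain cs where cs: "set cs \<subseteq> J S ts" "J S ts \<subseteq> ext R M {u\<in>J S ts. u \<otimes>\<^bsub>M\<^esub> t \<in> S} cs"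
    using main_P[OF fld U S phi bs hyp] by blast
  have eq: "{u\<in>J S ts. u \<otimes>\<^bsub>M\<^esub> t \<in> S} = J S (t#ts)" unfolding J_def by auto
  have "carrier M \<subseteq> ext R M (ext R M (J S (t#ts)) cs) ds"
    using ds(2) ext_mono[OF cs(2)[unfolded eq], of R M ds] by blast
  then have "carrier M \<subseteq> ext R M (J S (t#ts)) (ds @ cs)" unfolding ext_append .
  moreover have "set (ds @ cs) \<subseteq> carrier M" using ds(1) cs(1) unfolding J_def by auto
  ultimately show ?case by blast
qed

lemma part2:
  assumes fld: "field R" and sa: "subalgebra R M S" and ne: "S \<noteq> carrier M"
    and fc: "finite_codim R M S"
  shows "\<exists>I. ideal I M \<and> (\<forall>k \<in> carrier R. \<forall>x \<in> I. k \<odot>\<^bsub>M\<^esub> x \<in> I) \<and>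
           I \<subseteq> S \<and> I \<noteq> carrier M \<and>
           (\<forall>J. ideal J M \<and> J \<subseteq> S \<longrightarrow> J \<subseteq> I) \<and>
           finite_codim R M I \<and>
           subring ((\<lambda>s. I +>\<^bsub>M\<^esub> s) ` S) (M Quot I)"
proof -
  have sr: "subring S M" and ssm: "\<forall>k\<in>carrier R. \<forall>s\<in>S. k \<odot>\<^bsub>M\<^esub> s \<in> S"
    using sa unfolding subalgebra_def by auto
  have Sc: "S \<subseteq> carrier M" using subringE(1)[OF sr] .
  have S: "subsp R M S" unfolding subsp_def using ssm Sc subringE(2,7)[OF sr] by auto
  define I where "I = {x\<in>carrier M. \<forall>y\<in>carrier M. x \<otimes>\<^bsub>M\<^esub> y \<in> S}"
  note cp = conductor_props[OF M_cring sr ne, folded I_def]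
  obtain bs where bs: "set bs \<subseteq> carrier M" "carrier M \<subseteq> ext R M S bs"
    using codim_to_ext[OF fc Sc] by blast
  have ts: "set (\<one>\<^bsub>M\<^esub> # bs) \<subseteq> carrier M" using bs by auto
  obtain cs where cs: "set cs \<subseteq> carrier M" "carrier M \<subseteq> ext R M (J S (\<one>\<^bsub>M\<^esub> # bs)) cs"
    using J_ext[OF fld S bs ts] by blast
  have mult_ext: "x \<otimes>\<^bsub>M\<^esub> y \<in> S" if x: "x \<in> J S (\<one>\<^bsub>M\<^esub> # bs)" and "set bs' \<subseteq> set bs"
     and "y \<in> ext R M S bs'" for x y bs'
    using that(2,3)
  proof (induction bs' arbitrary: y)
    case Nil
    have "x \<in> S" using x unfolding J_def by auto
    then show ?case using Nil subringE(6)[OF sr] by simp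
  next
    case (Cons b bs')
    then obtain y0 k where yk: "y = y0 \<oplus>\<^bsub>M\<^esub> k \<odot>\<^bsub>M\<^esub> b" "y0 \<in> ext R M S bs'" "k \<in> carrier R"
      by (auto simp only: ext.simps)
    have sub: "set bs' \<subseteq> set bs" using Cons.prems(1) by auto
    have IH: "x \<otimes>\<^bsub>M\<^esub> y0 \<in> S" using Cons.IH[OF sub yk(2)] .
    have bb: "b \<in> set bs" using Cons.prems(1) by auto
    have xb: "x \<otimes>\<^bsub>M\<^esub> b \<in> S" using x bb unfolding J_def by auto
    have xc: "x \<in> carrier M" using x unfolding J_def by auto
    have bc: "b \<in> carrier M" using bb bs by auto
    have y0c: "y0 \<in> carrier M" using yk(2) ext_carrier[OF S] sub bs(1) by blast
    have kb: "k \<odot>\<^bsub>M\<^esub> b \<in> carrier M" using bc yk(3) by simp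
    have "x \<otimes>\<^bsub>M\<^esub> y = x \<otimes>\<^bsub>M\<^esub> y0 \<oplus>\<^bsub>M\<^esub> k \<odot>\<^bsub>M\<^esub> (x \<otimes>\<^bsub>M\<^esub> b)"
    proof -
      have "x \<otimes>\<^bsub>M\<^esub> (k \<odot>\<^bsub>M\<^esub> b) = (k \<odot>\<^bsub>M\<^esub> b) \<otimes>\<^bsub>M\<^esub> x" by (rule Mm_comm[OF xc kb])
      also have "\<dots> = k \<odot>\<^bsub>M\<^esub> (b \<otimes>\<^bsub>M\<^esub> x)" by (rule smult_assoc2[OF yk(3) bc xc])
      also have "\<dots> = k \<odot>\<^bsub>M\<^esub> (x \<otimes>\<^bsub>M\<^esub> b)" by (simp only: Mm_comm[OF bc xc])
      finally have e: "x \<otimes>\<^bsub>M\<^esub> (k \<odot>\<^bsub>M\<^esub> b) = k \<odot>\<^bsub>M\<^esub> (x \<otimes>\<^bsub>M\<^esub> b)" .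
      show ?thesis unfolding yk(1) Mr_distr[OF y0c kb xc] e ..
    qed
    moreover have "k \<odot>\<^bsub>M\<^esub> (x \<otimes>\<^bsub>M\<^esub> b) \<in> S" using ssm yk(3) xb by blast
    ultimately show ?case using IH subringE(7)[OF sr] by simp
  qed
  have IJ: "I = J S (\<one>\<^bsub>M\<^esub> # bs)"
  proof
    show "I \<subseteq> J S (\<one>\<^bsub>M\<^esub> # bs)" unfolding I_def J_def using bs(1) by auto
    show "J S (\<one>\<^bsub>M\<^esub> # bs) \<subseteq> I"
    proof
      fix x assume x: "x \<in> J S (\<one>\<^bsub>M\<^esub> # bs)"
      then show "x \<in> I" unfolding I_def using mult_ext[OF x order_refl] bs(2) unfolding J_def by auto
    qed
  qed
  have Ic: "I \<subseteq> carrier M" unfolding I_def by auto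
  have fcI: "finite_codim R M I" using ext_to_codim[OF Ic cs(1)] cs(2) IJ by simp
  have smI: "\<forall>k \<in> carrier R. \<forall>x \<in> I. k \<odot>\<^bsub>M\<^esub> x \<in> I"
    unfolding I_def using ssm by (auto simp: smult_assoc2)
  show ?thesis using cp fcI smI by blast
qed

end

theorem mainTheorem1:
  shows
  "(\<forall>(R :: ('a, 'b) ring_scheme) S.
      cring R \<and> subring S R \<and> S \<noteq> carrier R \<and> finite (a_rcosets\<^bsub>R\<^esub> S) \<longrightarrow>
      (\<exists>I. ideal I R \<and> I \<subseteq> S \<and> I \<noteq> carrier R \<and>
           (\<forall>J. ideal J R \<and> J \<subseteq> S \<longrightarrow> J \<subseteq> I) \<and>
           finite (carrier (R Quot I)) \<and>
           subring ((\<lambda>s. I +>\<^bsub>R\<^esub> s) ` S) (R Quot I)))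
   \<and>
   (\<forall>(K :: ('k, 'c) ring_scheme) (R :: ('k, 'd, 'e) module_scheme) S.
      field K \<and> algebra K R \<and> subalgebra K R S \<and> S \<noteq> carrier R \<and> finite_codim K R S \<longrightarrow>
      (\<exists>I. ideal I R \<and> (\<forall>k \<in> carrier K. \<forall>x \<in> I. k \<odot>\<^bsub>R\<^esub> x \<in> I) \<and>
           I \<subseteq> S \<and> I \<noteq> carrier R \<and>
           (\<forall>J. ideal J R \<and> J \<subseteq> S \<longrightarrow> J \<subseteq> I) \<and>
           finite_codim K R I \<and>
           subring ((\<lambda>s. I +>\<^bsub>R\<^esub> s) ` S) (R Quot I)))"
proof (intro conjI allI impI)
  fix R :: "('a, 'b) ring_scheme" and S
  assume h: "cring R \<and> subring S R \<and> S \<noteq> carrier R \<and> finite (a_rcosets\<^bsub>R\<^esub> S)"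
  define I where "I = {x\<in>carrier R. \<forall>y\<in>carrier R. x \<otimes>\<^bsub>R\<^esub> y \<in> S}"
  note cp = conductor_props[of R S, folded I_def]
  have "finite (carrier (R Quot I))"
    using finite_quot[of R S I] cp h I_def by blast
  then show "\<exists>I. ideal I R \<and> I \<subseteq> S \<and> I \<noteq> carrier R \<and>
           (\<forall>J. ideal J R \<and> J \<subseteq> S \<longrightarrow> J \<subseteq> I) \<and>
           finite (carrier (R Quot I)) \<and>
           subring ((\<lambda>s. I +>\<^bsub>R\<^esub> s) ` S) (R Quot I)"
    using cp h by blast
next
  fix K :: "('k, 'c) ring_scheme" and R :: "('k, 'd, 'e) module_scheme" and S
  assume h: "field K \<and> algebra K R \<and> subalgebra K R S \<and> S \<noteq> carrier R \<and> finite_codim K R S"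
  then show "\<exists>I. ideal I R \<and> (\<forall>k \<in> carrier K. \<forall>x \<in> I. k \<odot>\<^bsub>R\<^esub> x \<in> I) \<and>
           I \<subseteq> S \<and> I \<noteq> carrier R \<and>
           (\<forall>J. ideal J R \<and> J \<subseteq> S \<longrightarrow> J \<subseteq> I) \<and>
           finite_codim K R I \<and>
           subring ((\<lambda>s. I +>\<^bsub>R\<^esub> s) ` S) (R Quot I)"
    using algebra.part2[of K R S] by blast
qed

end
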